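(* Let $X$ and $Y$ be Hilbert spaces, let $A:X\to Y$ be a bounded linear operator with adjoint $A^\ast$, let $x^\dagger\in X$, put $y:=Ax^\dagger$, and define $f:X\to\mathbb{R}$ by $f(x):=\|Ax-y\|^2$, so that $\nabla f(x)=2A^\ast(Ax-y)$. Let $\mu>0$ and let $x\in X$ satisfy $x-x^\dagger=(A^\ast A)^\mu w$ for some $w\in X$. Then $$\|Ax-y\|^{\frac{2\mu+2}{2\mu+1}}\;\le\;\|w\|^{\frac{1}{2\mu+1}}\,\|A^\ast(Ax-y)\|.$$ Equivalently, the source condition implies a Kurdyka–Łojasiewicz inequality of the form $\varphi'\big(f(x)-f(x^\dagger)\big)\,\|\nabla f(x)\|\ge \frac{1}{k}$ (whenever $f(x)>0$) with desingularizing function $\varphi(t)=c\,t^{\frac{\mu}{2\mu+1}}$, where the constants $c,k>0$ depend only on $\mu$ and $\|w\|$.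
   Context: $(A^\ast A)^\mu$ denotes the fractional power of the self-adjoint nonnegative operator $A^\ast A$ defined via spectral calculus. Note $f(x^\dagger)=0$, so $x^\dagger$ minimizes $f$. A smooth index (desingularizing) function is $\varphi\in C[0,\bar r)\cap C^1(0,\bar r)$ with $\varphi(0)=0$ and $\varphi'>0$ on $(0,\bar r)$. *)

theory Defs
  imports "HOL-Analysis.Analysis" "HOL-Computational_Algebra.Polynomial"
begin

definition poly_op :: "real poly \<Rightarrow> ('a::real_vector \<Rightarrow> 'a) \<Rightarrow> 'a \<Rightarrow> 'a" where
  "poly_op p T x = (\<Sum>i\<le>degree p. coeff p i *\<^sub>R (T ^^ i) x)"

text \<open>Fractional power T^mu of a nonnegative self-adjoint bounded operator T via the
  (continuous) spectral calculus: for any sequence of real polynomials p_n converging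
  uniformly to t powr mu on [0, norm T] (which contains the spectrum of T),
  T^mu x is the limit of p_n(T) x.\<close>
definition frac_power :: "('a::real_inner \<Rightarrow> 'a) \<Rightarrow> real \<Rightarrow> 'a \<Rightarrow> 'a" where
  "frac_power T \<mu> x =
     (THE v. \<forall>p :: nat \<Rightarrow> real poly.
        uniform_limit {0..onorm T} (\<lambda>n t. poly (p n) t) (\<lambda>t. t powr \<mu>) sequentially
        \<longrightarrow> (\<lambda>n. poly_op (p n) T x) \<longlonglongrightarrow> v)"

end

theory Submission
  imports Defs "HOL-Computational_Algebra.Fundamental_Theorem_Algebra"
begin


lemma riesz:
  fixes \<phi> :: "'a::{real_inner,complete_space} \<Rightarrow> real"
  assumes bl: "bounded_linear \<phi>"
  shows "\<exists>z. \<forall>x. \<phi> x = x \<bullet> z"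
proof -
  interpret bounded_linear \<phi> by fact
  obtain K where K: "K > 0" "\<And>x. norm (\<phi> x) \<le> norm x * K" using pos_bounded by blast
  define J where "J z = (norm z)^2 - 2 * \<phi> z" for z
  have Jlow: "J z \<ge> - (K^2)" for z
  proof -
    have "\<phi> z \<le> norm z * K" using K(2)[of z] by simp
    hence "J z \<ge> (norm z)^2 - 2 * (norm z * K)" unfolding J_def by simp
    moreover have "(norm z)^2 - 2 * (norm z * K) \<ge> - (K^2)"
      using zero_le_power2[of "norm z - K"] unfolding power2_eq_square by (simp add: algebra_simps)
    ultimately show ?thesis by linarith
  qed
  define m where "m = Inf (range J)"
  have bdd: "bdd_below (range J)" using Jlow by (intro bdd_belowI[of _ "-(K^2)"]) auto
  have mle: "m \<le> J z" for z unfolding m_def by (rule cInf_lower) (use bdd in auto)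
  have "\<exists>z. J z < m + 1/(Suc n)" for n
  proof -
    have "Inf (range J) < m + 1/(Suc n)" unfolding m_def by simp
    then show ?thesis by (subst (asm) cInf_less_iff) (use bdd in auto)
  qed
  then obtain z where z: "\<And>n. J (z n) < m + 1/(Suc n)" by metis
  have para: "(norm (a - b))^2 \<le> 2 * (J a + J b - 2 * m)" for a b
  proof -
    have "m \<le> J ((1/2) *\<^sub>R (a + b))" by (rule mle)
    moreover have "J ((1/2) *\<^sub>R (a + b)) = (1/4) * (norm (a+b))^2 - \<phi> a - \<phi> b"
      unfolding J_def scale add norm_scaleR by (simp add: power_mult_distrib field_simps)
    moreover have "(norm (a - b))^2 + (norm (a+b))^2 = 2 * (norm a)^2 + 2 * (norm b)^2"
      by (simp add: power2_norm_eq_inner inner_diff inner_add inner_commute)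
    ultimately show ?thesis unfolding J_def by argo
  qed
  have "Cauchy z"
  proof (rule metric_CauchyI)
    fix e :: real assume e: "e > 0"
    obtain M :: nat where M: "4 / e^2 < real M" using reals_Archimedean2 by blast
    show "\<exists>M. \<forall>p\<ge>M. \<forall>n\<ge>M. dist (z p) (z n) < e"
    proof (intro exI allI impI)
      fix p n assume pn: "M \<le> p" "M \<le> n"
      have "(norm (z p - z n))^2 \<le> 2 * (J (z p) + J (z n) - 2 * m)" by (rule para)
      also have "\<dots> < 2 * (1/Suc p + 1/Suc n)" using z[of p] z[of n] by argo
      also have "\<dots> \<le> 2 * (1/Suc M + 1/Suc M)"
        using pn by (intro mult_left_mono add_mono divide_left_mono) auto
      also have "\<dots> = 4 / Suc M" by simp
      also have "\<dots> < e^2" using M e zero_le_power2[of e] by (simp add: field_simps) (smt (verit) zero_le_power2)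
      finally have "(norm (z p - z n))^2 < e^2" .
      then show "dist (z p) (z n) < e" using e
        by (simp add: dist_norm power_less_imp_less_base)
    qed
  qed
  then obtain z0 where lim: "z \<longlonglongrightarrow> z0" using Cauchy_convergent_iff convergent_def by blast
  have Jc: "(\<lambda>n. J (z n)) \<longlonglongrightarrow> J z0"
    unfolding J_def by (intro tendsto_intros lim tendsto)
  have "J z0 \<le> m"
  proof (rule tendsto_le[OF _ _ Jc])
    show "(\<lambda>n. m + 1 / real (Suc n)) \<longlonglongrightarrow> m"
      using tendsto_add[OF tendsto_const[of m] LIMSEQ_Suc[OF lim_inverse_n']] by (simp add: divide_inverse)
    show "\<forall>\<^sub>F n in sequentially. J (z n) \<le> m + 1 / real (Suc n)"
      using z by (intro always_eventually allI less_imp_le)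
  qed simp
  have key: "z0 \<bullet> h = \<phi> h" for h
  proof -
    define c where "c = z0 \<bullet> h - \<phi> h"
    define d where "d = (norm h)^2"
    have d0: "d \<ge> 0" unfolding d_def by simp
    have quad: "2 * t * c + t^2 * d \<ge> 0" for t
    proof -
      have "J z0 \<le> J (z0 + t *\<^sub>R h)" using mle \<open>J z0 \<le> m\<close> by (meson order_trans)
      moreover have "J (z0 + t *\<^sub>R h) = J z0 + 2 * t * c + t^2 * d"
        unfolding J_def c_def d_def power2_norm_eq_inner
        by (simp add: add scale inner_add inner_commute algebra_simps power2_eq_square)
      ultimately show ?thesis by linarith
    qed
    define s where "s = 1 / (d+1)"
    have s0: "s > 0" using d0 unfolding s_def by simp
    have sd: "s * d < 2" using d0 unfolding s_def by (simp add: field_simps)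
    note H = quad[of "- c * s"]
    have E: "2 * (- c * s) * c + (- c * s)^2 * d = (c^2 * s) * (s * d - 2)"
      by (simp add: algebra_simps power2_eq_square)
    have "(c^2 * s) * (s * d - 2) \<ge> 0" using H E by linarith
    moreover have "s * d - 2 < 0" using sd by simp
    ultimately have "c^2 * s \<le> 0" by (simp add: mult_le_0_iff zero_le_mult_iff)
    hence "c^2 \<le> 0" using s0 by (simp add: mult_le_0_iff)
    hence "c^2 = 0" by (simp add: antisym)
    thus ?thesis unfolding c_def by simp
  qed
  show ?thesis by (rule exI[of _ z0]) (metis key inner_commute)
qed



lemma poly_op_sum:
  assumes "degree p \<le> N"
  shows "poly_op p T x = (\<Sum>i\<le>N. coeff p i *\<^sub>R (T ^^ i) x)"
  unfolding poly_op_def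
  by (rule sum.mono_neutral_left) (use assms in \<open>auto intro: coeff_eq_0 simp: not_le\<close>)

lemma poly_op_0 [simp]: "poly_op 0 T x = 0"
  by (simp add: poly_op_def)

lemma poly_op_pCons:
  assumes "linear T"
  shows "poly_op (pCons a p) T x = a *\<^sub>R x + T (poly_op p T x)"
proof -
  have "poly_op (pCons a p) T x = (\<Sum>i\<le>Suc (degree p). coeff (pCons a p) i *\<^sub>R (T ^^ i) x)"
    by (rule poly_op_sum) (rule degree_pCons_le)
  also have "\<dots> = a *\<^sub>R x + (\<Sum>i\<le>degree p. coeff p i *\<^sub>R T ((T ^^ i) x))"
    by (subst sum.atMost_Suc_shift) simp
  also have "(\<Sum>i\<le>degree p. coeff p i *\<^sub>R T ((T ^^ i) x)) = T (poly_op p T x)"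
    unfolding poly_op_def using assms by (simp add: linear_sum linear_scale)
  finally show ?thesis .
qed

context
  fixes T :: "'a::real_vector \<Rightarrow> 'a"
  assumes lin: "linear T"
begin

lemma poly_op_add: "poly_op (p + q) T x = poly_op p T x + poly_op q T x"
proof (induction p q rule: poly_induct2)
  case 0 then show ?case by simp
next
  case (pCons a p b q)
  then show ?case using lin
    by (simp add: poly_op_pCons linear_add scaleR_add_left algebra_simps)
qed

lemma poly_op_smult: "poly_op (smult c p) T x = c *\<^sub>R poly_op p T x"
  by (induction p) (simp_all add: poly_op_pCons lin linear_add linear_scale scaleR_add_right)

lemma poly_op_minus: "poly_op (- p) T x = - poly_op p T x"
  using poly_op_smult[of "-1" p x] by simp

lemma poly_op_diff: "poly_op (p - q) T x = poly_op p T x - poly_op q T x"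
  using poly_op_add[of p "-q" x] poly_op_minus[of q x] by simp

lemma poly_op_mult: "poly_op (p * q) T x = poly_op p T (poly_op q T x)"
  by (induction p) (simp_all add: poly_op_pCons lin poly_op_add poly_op_smult)

lemma poly_op_const [simp]: "poly_op [:c:] T x = c *\<^sub>R x"
  by (simp add: poly_op_pCons lin linear_0)

lemma poly_op_X [simp]: "poly_op [:0,1:] T x = T x"
  by (simp add: poly_op_pCons lin linear_0)

lemma poly_op_comm: "poly_op p T (T x) = T (poly_op p T x)"
proof -
  have "poly_op (p * [:0,1:]) T x = poly_op ([:0,1:] * p) T x" by (simp add: mult.commute)
  thus ?thesis by (metis poly_op_mult poly_op_X)
qed

end



definition E :: "real poly \<Rightarrow> complex \<Rightarrow> complex" where
  "E p z = poly (map_poly complex_of_real p) z"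

lemma E_pCons [simp]: "E (pCons a p) z = of_real a + z * E p z"
  by (simp add: E_def map_poly_pCons)

lemma E_0 [simp]: "E 0 z = 0" by (simp add: E_def)

lemma E_add: "E (p + q) z = E p z + E q z"
  by (induction p q rule: poly_induct2) (simp_all add: algebra_simps)

lemma E_smult: "E (smult c p) z = of_real c * E p z"
  by (induction p) (simp_all add: algebra_simps)

lemma E_mult: "E (p * q) z = E p z * E q z"
  by (induction p) (simp_all add: E_add E_smult algebra_simps)

lemma E_real: "E p (of_real t) = of_real (poly p t)"
  by (induction p) simp_all

lemma E_root:
  assumes "degree p > 0"
  shows "\<exists>z. E p z = 0"
proof -
  have "degree (map_poly complex_of_real p) = degree p"
    by (simp add: degree_map_poly)
  hence "\<not> constant (poly (map_poly complex_of_real p))"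
    using assms by (simp add: constant_degree)
  then show ?thesis unfolding E_def by (rule fundamental_theorem_of_algebra)
qed

inductive PT :: "real \<Rightarrow> real poly \<Rightarrow> bool" for M where
  sq: "g \<in> {1, [:0,1:], [:M,-1:], [:0,M,-1:]} \<Longrightarrow> PT M (s * s * g)"
| add: "PT M p \<Longrightarrow> PT M q \<Longrightarrow> PT M (p + q)"

lemma PT_const: "c \<ge> 0 \<Longrightarrow> PT M [:c:]"
  using PT.sq[of 1 M "[:sqrt c:]"] by simp

lemma PT_sqmul: "PT M p \<Longrightarrow> PT M (s * s * p)"
proof (induction rule: PT.induct)
  case (sq g r)
  have eq: "s * s * (r * r * g) = (s*r) * (s*r) * g" by (simp only: mult_ac)
  show ?case unfolding eq using sq by (rule PT.sq)
next
  case (add p q)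
  then show ?case by (metis distrib_left PT.add)
qed

lemma PT_X: "PT M p \<Longrightarrow> PT M ([:0,1:] * p)"
proof (induction rule: PT.induct)
  case (sq g s)
  let ?X = "[:0,1::real:]"
  have XY: "[:0,M,-1:] = ?X * [:M,-1:]" by simp
  from sq consider "g = 1" | "g = ?X" | "g = [:M,-1:]" | "g = [:0,M,-1:]" by blast
  then show ?case
  proof cases
    case 1
    have eq: "?X * (s * s * g) = s * s * ?X" using 1 by (simp only: mult_ac mult_1_right)
    show ?thesis unfolding eq by (rule PT.sq) simp
  next
    case 2
    have eq: "?X * (s * s * g) = (?X * s) * (?X * s) * 1" using 2 by (simp only: mult_ac mult_1_right)
    show ?thesis unfolding eq by (rule PT.sq) simp
  next
    case 3
    have eq: "?X * (s * s * g) = s * s * [:0,M,-1:]" using 3 XY by (simp only: mult_ac)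
    show ?thesis unfolding eq by (rule PT.sq) simp
  next
    case 4
    have eq: "?X * (s * s * g) = (?X * s) * (?X * s) * [:M,-1:]" using 4 XY by (simp only: mult_ac)
    show ?thesis unfolding eq by (rule PT.sq) simp
  qed
next
  case (add p q)
  then show ?case by (metis distrib_left PT.add)
qed

lemma PT_MX: "PT M p \<Longrightarrow> PT M ([:M,-1:] * p)"
proof (induction rule: PT.induct)
  case (sq g s)
  let ?X = "[:0,1::real:]" and ?Y = "[:M,-1::real:]"
  have XY: "[:0,M,-1:] = ?X * ?Y" by simp
  from sq consider "g = 1" | "g = ?X" | "g = ?Y" | "g = [:0,M,-1:]" by blast
  then show ?case
  proof cases
    case 1
    have eq: "?Y * (s * s * g) = s * s * ?Y" using 1 by (simp only: mult_ac mult_1_right)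
    show ?thesis unfolding eq by (rule PT.sq) simp
  next
    case 2
    have eq: "?Y * (s * s * g) = s * s * [:0,M,-1:]" using 2 XY by (simp only: mult_ac)
    show ?thesis unfolding eq by (rule PT.sq) simp
  next
    case 3
    have eq: "?Y * (s * s * g) = (?Y * s) * (?Y * s) * 1" using 3 by (simp only: mult_ac mult_1_right)
    show ?thesis unfolding eq by (rule PT.sq) simp
  next
    case 4
    have eq: "?Y * (s * s * g) = (?Y * s) * (?Y * s) * ?X" using 4 XY by (simp only: mult_ac)
    show ?thesis unfolding eq by (rule PT.sq) simp
  qed
next
  case (add p q)
  then show ?case by (metis distrib_left PT.add)
qed

lemma PT_lin1: "c \<ge> 0 \<Longrightarrow> PT M p \<Longrightarrow> PT M ([:c,1:] * p)"
proof -
  assume c: "c \<ge> 0" and p: "PT M p"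
  have h1: "[:sqrt c:] * [:sqrt c:] = [:c:]" using c by simp
  have h2: "[:c,1:] = [:c:] + [:0,1:]" by simp
  have eq: "[:c,1:] * p = [:sqrt c:] * [:sqrt c:] * p + [:0,1:] * p"
    by (simp only: h1 h2 distrib_right)
  show ?thesis unfolding eq by (rule PT.add[OF PT_sqmul[OF p] PT_X[OF p]])
qed

lemma PT_lin2: "c \<ge> M \<Longrightarrow> PT M p \<Longrightarrow> PT M ([:c,-1:] * p)"
proof -
  assume c: "c \<ge> M" and p: "PT M p"
  have h1: "[:sqrt (c-M):] * [:sqrt (c-M):] = [:c-M:]" using c by simp
  have h2: "[:c,-1:] = [:c-M:] + [:M,-1:]" by simp
  have eq: "[:c,-1:] * p = [:sqrt (c-M):] * [:sqrt (c-M):] * p + [:M,-1:] * p"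
    by (simp only: h1 h2 distrib_right)
  show ?thesis unfolding eq by (rule PT.add[OF PT_sqmul[OF p] PT_MX[OF p]])
qed

lemma PT_quad: "PT M p \<Longrightarrow> PT M (([:-a,1:] * [:-a,1:] + [:b:] * [:b:]) * p)"
  unfolding distrib_right by (intro PT.add PT_sqmul)

lemma deg1_form: "degree r \<le> 1 \<Longrightarrow> r = [:coeff r 0, coeff r 1:]"
  by (rule poly_eqI) (auto simp: coeff_pCons coeff_eq_0 split: nat.splits)

lemma PT_pos:
  assumes M0: "M \<ge> 0"
  shows "(\<forall>t\<in>{0..M}. poly p t > 0) \<Longrightarrow> PT M p"
proof (induction "degree p" arbitrary: p rule: less_induct)
  case less
  note pos = less.prems
  show ?case
  proof (cases "degree p = 0")
    case True
    then obtain c where pc: "p = [:c:]" by (metis degree_eq_zeroE)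
    have "c > 0" using pos M0 unfolding pc by auto
    then show ?thesis unfolding pc by (intro PT_const) simp
  next
    case False
    then obtain z where z: "E p z = 0" using E_root by blast
    have p0: "p \<noteq> 0" using False by auto
    show ?thesis
    proof (cases "Im z = 0")
      case True
      define r where "r = Re z"
      have zr: "z = of_real r" unfolding r_def using True by (simp add: complex_eq_iff)
      have "poly p r = 0" using z E_real[of p r] zr by simp
      then obtain q where pq: "p = [:-r,1:] * q" by (auto simp: poly_eq_0_iff_dvd elim: dvdE)
      have q0: "q \<noteq> 0" using p0 pq by auto
      have "degree p = degree [:-r,1:] + degree q" unfolding pq by (rule degree_mult_eq) (use q0 in auto)
      hence dq: "degree q < degree p" by simp
      have rout: "r < 0 \<or> r > M"
      proof (rule ccontr)
        assume "\<not> (r < 0 \<or> r > M)"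
        hence "r \<in> {0..M}" by auto
        with pos \<open>poly p r = 0\<close> show False by fastforce
      qed
      then show ?thesis
      proof
        assume r: "r < 0"
        have "\<forall>t\<in>{0..M}. poly q t > 0"
        proof
          fix t assume t: "t \<in> {0..M}"
          have "0 < poly p t" using pos t by auto
          also have "poly p t = (t - r) * poly q t" unfolding pq by (simp add: algebra_simps)
          finally show "poly q t > 0" using t r by (simp add: zero_less_mult_iff)
        qed
        hence "PT M q" using less.hyps dq by blast
        from PT_lin1[OF _ this, of "-r"] r show ?thesis unfolding pq by simp
      next
        assume r: "r > M"
        have "\<forall>t\<in>{0..M}. poly (-q) t > 0"
        proof
          fix t assume t: "t \<in> {0..M}"
          have "0 < poly p t" using pos t by auto
          also have "poly p t = (r - t) * poly (-q) t" unfolding pq by (simp add: algebra_simps)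
          finally show "poly (-q) t > 0" using t r by (simp add: zero_less_mult_iff mult_less_0_iff)
        qed
        hence "PT M (-q)" using less.hyps dq by fastforce
        from PT_lin2[OF _ this, of r] r have "PT M ([:r,-1:] * - q)" by simp
        moreover have "[:r,-1:] * - q = p" unfolding pq by simp
        ultimately show ?thesis by simp
      qed
    next
      case False
      define a where "a = Re z"
      define b where "b = Im z"
      have b0: "b \<noteq> 0" using False b_def by simp
      define f where "f = [:-a,1:] * [:-a,1:] + [:b:] * [:b:]"
      have Ef: "E f z = 0"
      proof -
        have "E f z = (z - of_real a) * (z - of_real a) + of_real b * of_real b"
          unfolding f_def by (simp add: E_add E_mult algebra_simps)
        also have "z - of_real a = \<i> * of_real b" unfolding a_def b_def
          by (simp add: complex_eq_iff)
        finally show ?thesis by (simp add: algebra_simps)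
      qed
      have f0: "f \<noteq> 0"
      proof
        assume "f = 0" hence "E f (of_real a) = 0" by simp
        moreover have "E f (of_real a) = of_real (b*b)" unfolding f_def by (simp add: E_add E_mult)
        ultimately show False using b0 by simp
      qed
      have df: "degree f = 2" unfolding f_def using b0 by (simp add: numeral_2_eq_2)
      define q where "q = p div f"
      define r where "r = p mod f"
      have pqr: "p = f * q + r" unfolding q_def r_def by (simp add: mult.commute)
      have Er: "E r z = 0" using z Ef pqr by (metis E_add E_mult add_0 mult_zero_left)
      have r0: "r = 0"
      proof (rule ccontr)
        assume "r \<noteq> 0"
        hence "degree r < 2" using degree_mod_less[OF f0, of p] df unfolding r_def by auto
        hence rr: "r = [:coeff r 0, coeff r 1:]" by (intro deg1_form) simp
        have "E r z = of_real (coeff r 0) + z * of_real (coeff r 1)"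
          by (subst rr) simp
        hence "of_real (coeff r 0) + z * of_real (coeff r 1) = 0" using Er by simp
        hence "Im (of_real (coeff r 0) + z * of_real (coeff r 1)) = 0"
              "Re (of_real (coeff r 0) + z * of_real (coeff r 1)) = 0" by simp_all
        hence "b * coeff r 1 = 0" "coeff r 0 + a * coeff r 1 = 0" unfolding a_def b_def by simp_all
        hence "coeff r 1 = 0" "coeff r 0 = 0" using b0 by simp_all
        hence "r = 0" by (subst rr) simp
        with \<open>r \<noteq> 0\<close> show False by simp
      qed
      have pfq: "p = f * q" using pqr r0 by simp
      have q0: "q \<noteq> 0" using p0 pfq by auto
      have dq: "degree q < degree p" using q0 f0 df pfq by (simp add: degree_mult_eq)
      have fpos: "poly f t > 0" for t
      proof -
        have "poly f t = (t - a)^2 + b^2" unfolding f_def by (simp add: power2_eq_square algebra_simps)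
        thus ?thesis using b0 by (simp add: add_nonneg_pos)
      qed
      have "\<forall>t\<in>{0..M}. poly q t > 0"
      proof
        fix t assume t: "t \<in> {0..M}"
        have "0 < poly p t" using pos t by auto
        also have "poly p t = poly f t * poly q t" unfolding pfq by simp
        finally show "poly q t > 0" using fpos[of t] by (simp add: zero_less_mult_iff)
      qed
      hence "PT M q" using less.hyps dq by blast
      from PT_quad[OF this, of a b] show ?thesis unfolding pfq f_def .
    qed
  qed
qed



lemma poly_op_one [simp]: "linear T \<Longrightarrow> poly_op 1 T x = x"
  using poly_op_const[of T 1 x] by (simp add: one_pCons)

locale posop =
  fixes T :: "'a::{real_inner,complete_space} \<Rightarrow> 'a" and M :: real
  assumes bl: "bounded_linear T"
    and sa: "\<And>x y. T x \<bullet> y = x \<bullet> T y"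
    and pos: "\<And>x. 0 \<le> T x \<bullet> x"
    and sqb: "\<And>x. (norm (T x))^2 \<le> M * (T x \<bullet> x)"
    and nb: "\<And>x. norm (T x) \<le> M * norm x"
    and M0: "0 \<le> M"
begin

lemma lin: "linear T" using bl bounded_linear.linear by blast

lemma psa: "poly_op p T x \<bullet> y = x \<bullet> poly_op p T y"
proof (induction p arbitrary: x y)
  case 0 then show ?case by simp
next
  case (pCons a p)
  have "poly_op (pCons a p) T x \<bullet> y = a * (x \<bullet> y) + T (poly_op p T x) \<bullet> y"
    by (simp add: poly_op_pCons lin inner_add_left)
  also have "T (poly_op p T x) \<bullet> y = poly_op p T x \<bullet> T y" by (rule sa)
  also have "\<dots> = x \<bullet> poly_op p T (T y)" by (rule pCons.IH)
  also have "poly_op p T (T y) = T (poly_op p T y)" by (rule poly_op_comm[OF lin])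
  finally show ?case by (simp add: poly_op_pCons lin inner_add_right)
qed

lemma PT_Pos: "PT M p \<Longrightarrow> 0 \<le> poly_op p T x \<bullet> x"
proof (induction rule: PT.induct)
  case (sq g s)
  define y where "y = poly_op s T x"
  have "poly_op (s * s * g) T x = poly_op s T (poly_op g T y)"
  proof -
    have "s * s * g = s * (g * s)" by (simp only: mult_ac)
    thus ?thesis unfolding y_def by (simp only: poly_op_mult[OF lin])
  qed
  hence eq: "poly_op (s * s * g) T x \<bullet> x = poly_op g T y \<bullet> y"
    unfolding y_def by (metis psa inner_commute)
  have "0 \<le> poly_op g T y \<bullet> y"
  proof -
    from sq consider "g = 1" | "g = [:0,1:]" | "g = [:M,-1:]" | "g = [:0,M,-1:]" by blast
    then show ?thesis
    proof cases
      case 1 then show ?thesis using lin by simp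
    next
      case 2 then show ?thesis using lin pos by simp
    next
      case 3
      have "poly_op g T y = M *\<^sub>R y - T y" unfolding 3
        by (simp add: poly_op_pCons lin linear_neg linear_0)
      hence "poly_op g T y \<bullet> y = M * (norm y)^2 - T y \<bullet> y"
        by (simp add: inner_diff_left power2_norm_eq_inner)
      moreover have "T y \<bullet> y \<le> norm (T y) * norm y" by (rule norm_cauchy_schwarz)
      moreover have "norm (T y) * norm y \<le> M * norm y * norm y"
        using nb[of y] by (simp add: mult_right_mono)
      ultimately show ?thesis by (simp add: power2_eq_square)
    next
      case 4
      have "poly_op g T y = M *\<^sub>R T y - T (T y)" unfolding 4
        by (simp add: poly_op_pCons lin linear_neg linear_diff linear_scale linear_0)
      moreover have "T (T y) \<bullet> y = T y \<bullet> T y" by (rule sa)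
      ultimately have "poly_op g T y \<bullet> y = M * (T y \<bullet> y) - T y \<bullet> T y"
        by (simp add: inner_diff_left)
      then show ?thesis using sqb[of y] by (simp add: power2_norm_eq_inner)
    qed
  qed
  then show ?case using eq by simp
next
  case (add p q)
  then show ?case by (simp add: poly_op_add[OF lin] inner_add_left)
qed

lemma Pos_approx:
  assumes "\<forall>t\<in>{0..M}. poly p t \<ge> - d"
  shows "poly_op p T x \<bullet> x \<ge> - d * (x \<bullet> x)"
proof (rule ccontr)
  assume "\<not> ?thesis"
  hence lt: "poly_op p T x \<bullet> x < - d * (x \<bullet> x)" by simp
  define e where "e = (- d * (x \<bullet> x) - poly_op p T x \<bullet> x) / (x \<bullet> x + 1)"
  have xx: "x \<bullet> x \<ge> 0" by simp
  have xx1: "x \<bullet> x + 1 > 0" using xx by linarith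
  have e0: "e > 0" unfolding e_def using lt xx1 by (intro divide_pos_pos) simp_all
  have "\<forall>t\<in>{0..M}. poly (p + [:d + e:]) t > 0" proof
    fix t assume "t \<in> {0..M}"
    hence "poly p t \<ge> - d" using assms by blast
    thus "poly (p + [:d + e:]) t > 0" using e0 by simp
  qed
  hence "PT M (p + [:d + e:])" by (rule PT_pos[OF M0])
  hence "0 \<le> poly_op (p + [:d + e:]) T x \<bullet> x" by (rule PT_Pos)
  hence "0 \<le> poly_op p T x \<bullet> x + (d + e) * (x \<bullet> x)"
    by (simp add: poly_op_add[OF lin] lin inner_add_left)
  moreover have "e * (x \<bullet> x) < - d * (x \<bullet> x) - poly_op p T x \<bullet> x"
  proof -
    have "e * (x \<bullet> x) < e * (x \<bullet> x + 1)" using e0 by simp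
    also have "\<dots> = - d * (x \<bullet> x) - poly_op p T x \<bullet> x" unfolding e_def using xx1 by simp
    finally show ?thesis .
  qed
  ultimately show False by (simp add: algebra_simps)
qed

lemma norm_bound:
  assumes "\<forall>t\<in>{0..M}. \<bar>poly q t\<bar> \<le> e"
  shows "norm (poly_op q T x) \<le> e * norm x"
proof -
  have "0 \<in> {0..M}" using M0 by simp
  hence "\<bar>poly q 0\<bar> \<le> e" using assms by blast
  hence e0: "e \<ge> 0" by (meson abs_ge_zero order_trans)
  have "\<forall>t\<in>{0..M}. poly ([:e^2:] - q * q) t \<ge> - 0"
  proof
    fix t assume "t \<in> {0..M}"
    hence "\<bar>poly q t\<bar> \<le> e" using assms by blast
    hence "\<bar>poly q t\<bar>^2 \<le> e^2" by (intro power_mono) simp_all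
    hence "(poly q t)^2 \<le> e^2" by simp
    thus "poly ([:e^2:] - q * q) t \<ge> - 0" by (simp add: power2_eq_square)
  qed
  from Pos_approx[OF this, of x]
  have "0 \<le> poly_op ([:e^2:] - q * q) T x \<bullet> x" by simp
  also have "poly_op ([:e^2:] - q * q) T x \<bullet> x = e^2 * (x \<bullet> x) - poly_op q T x \<bullet> poly_op q T x"
  proof -
    have "poly_op ([:e^2:] - q * q) T x = e^2 *\<^sub>R x - poly_op q T (poly_op q T x)"
      by (simp only: poly_op_diff[OF lin] poly_op_mult[OF lin] poly_op_const[OF lin])
    moreover have "poly_op q T (poly_op q T x) \<bullet> x = poly_op q T x \<bullet> poly_op q T x"
      by (rule psa)
    ultimately show ?thesis by (simp only: inner_diff_left inner_scaleR_left)
  qed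
  finally have "(norm (poly_op q T x))^2 \<le> (e * norm x)^2"
    unfolding power_mult_distrib power2_norm_eq_inner by linarith
  thus ?thesis by (rule power2_le_imp_le) (use e0 in simp)
qed

end



lemma rpf_poly: "real_polynomial_function (g :: real \<Rightarrow> real) \<Longrightarrow> \<exists>p. \<forall>t. g t = poly p t"
proof (induction rule: real_polynomial_function.induct)
  case (linear f)
  then obtain c where "f = (\<lambda>x. x * c)" using real_bounded_linear by blast
  then show ?case by (intro exI[of _ "[:0,c:]"]) simp
next
  case (const c)
  then show ?case by (intro exI[of _ "[:c:]"]) simp
next
  case (add f g)
  then obtain p q where "\<forall>t. f t = poly p t" "\<forall>t. g t = poly q t" by blast
  then show ?case by (intro exI[of _ "p + q"]) simp
next
  case (mult f g)
  then obtain p q where "\<forall>t. f t = poly p t" "\<forall>t. g t = poly q t" by blast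
  then show ?case by (intro exI[of _ "p * q"]) simp
qed

lemma weier:
  fixes f :: "real \<Rightarrow> real"
  assumes "continuous_on {a..b} f" "e > 0"
  shows "\<exists>p. \<forall>t\<in>{a..b}. \<bar>f t - poly p t\<bar> < e"
proof -
  obtain g :: "real \<Rightarrow> real" where g: "real_polynomial_function g" "\<And>x. x \<in> {a..b} \<Longrightarrow> \<bar>f x - g x\<bar> < e"
    using Stone_Weierstrass_real_polynomial_function[of "{a..b}" f e] assms by auto
  obtain p where "\<forall>t. g t = poly p t" using rpf_poly[OF g(1)] by blast
  then show ?thesis using g(2) by metis
qed

context posop
begin

definition pa :: "(real \<Rightarrow> real) \<Rightarrow> nat \<Rightarrow> real poly" where
  "pa f n = (SOME p. \<forall>t\<in>{0..M}. \<bar>f t - poly p t\<bar> < 1 / Suc n)"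

lemma pa_spec:
  assumes "continuous_on {0..M} f"
  shows "\<forall>t\<in>{0..M}. \<bar>f t - poly (pa f n) t\<bar> < 1 / Suc n"
  unfolding pa_def by (rule someI_ex) (rule weier[OF assms], simp)

definition Phi :: "(real \<Rightarrow> real) \<Rightarrow> 'a \<Rightarrow> 'a" where
  "Phi f x = lim (\<lambda>n. poly_op (pa f n) T x)"

lemma eventually_small: "e > 0 \<Longrightarrow> \<forall>\<^sub>F n in sequentially. 1 / real (Suc n) < e"
proof -
  assume e: "e > 0"
  obtain N :: nat where N: "1 / e < real N" using reals_Archimedean2 by blast
  show ?thesis unfolding eventually_sequentially
  proof (intro exI allI impI)
    fix n assume "N \<le> n"
    hence "1 / e < real (Suc n)" using N by simp
    thus "1 / real (Suc n) < e" using e by (simp add: field_simps)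
  qed
qed

lemma pa_uniform:
  assumes "continuous_on {0..M} f"
  shows "uniform_limit {0..M} (\<lambda>n t. poly (pa f n) t) f sequentially"
proof (rule uniform_limitI)
  fix e :: real assume "e > 0"
  then show "\<forall>\<^sub>F n in sequentially. \<forall>t\<in>{0..M}. dist (poly (pa f n) t) (f t) < e"
  proof (rule eventually_mono[OF eventually_small])
    fix n assume n: "1 / real (Suc n) < e"
    show "\<forall>t\<in>{0..M}. dist (poly (pa f n) t) (f t) < e"
      using pa_spec[OF assms, of n] n by (auto simp: dist_real_def abs_minus_commute)
  qed
qed

lemma diff_bound:
  assumes "\<forall>t\<in>{0..M}. \<bar>poly p t - poly q t\<bar> \<le> e"
  shows "norm (poly_op p T x - poly_op q T x) \<le> e * norm x"
  using norm_bound[of "p - q" e x] assms by (simp add: poly_op_diff[OF lin])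

lemma pa_conv:
  assumes f: "continuous_on {0..M} f"
  shows "(\<lambda>n. poly_op (pa f n) T x) \<longlonglongrightarrow> Phi f x"
proof -
  have "Cauchy (\<lambda>n. poly_op (pa f n) T x)"
  proof (rule metric_CauchyI)
    fix e :: real assume e: "e > 0"
    define c where "c = norm x + 1"
    have c: "c > 0" unfolding c_def by (simp add: add_nonneg_pos)
    obtain N :: nat where N: "2 * c / e < real N" using reals_Archimedean2 by blast
    show "\<exists>N. \<forall>m\<ge>N. \<forall>n\<ge>N. dist (poly_op (pa f m) T x) (poly_op (pa f n) T x) < e"
    proof (intro exI allI impI)
      fix m n assume mn: "N \<le> m" "N \<le> n"
      have b: "\<forall>t\<in>{0..M}. \<bar>poly (pa f m) t - poly (pa f n) t\<bar> \<le> 1 / Suc m + 1 / Suc n"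
      proof
        fix t assume t: "t \<in> {0..M}"
        have "\<bar>f t - poly (pa f m) t\<bar> < 1 / Suc m" "\<bar>f t - poly (pa f n) t\<bar> < 1 / Suc n"
          using pa_spec[OF f] t by auto
        thus "\<bar>poly (pa f m) t - poly (pa f n) t\<bar> \<le> 1 / Suc m + 1 / Suc n" by argo
      qed
      have "dist (poly_op (pa f m) T x) (poly_op (pa f n) T x) \<le> (1 / Suc m + 1 / Suc n) * norm x"
        unfolding dist_norm by (rule diff_bound[OF b])
      also have "\<dots> \<le> (1 / Suc N + 1 / Suc N) * c"
        using mn unfolding c_def
        by (intro mult_mono add_mono divide_left_mono) auto
      also have "\<dots> = 2 * c / Suc N" by simp
      also have "\<dots> < e" using N e c by (simp add: field_simps)
      finally show "dist (poly_op (pa f m) T x) (poly_op (pa f n) T x) < e" .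
    qed
  qed
  then show ?thesis unfolding Phi_def using Cauchy_convergent_iff convergent_LIMSEQ_iff by blast
qed

lemma Phi_conv:
  assumes f: "continuous_on {0..M} f"
    and ul: "uniform_limit {0..M} (\<lambda>n t. poly (p n) t) f sequentially"
  shows "(\<lambda>n. poly_op (p n) T x) \<longlonglongrightarrow> Phi f x"
proof -
  have "(\<lambda>n. poly_op (p n) T x - poly_op (pa f n) T x) \<longlonglongrightarrow> 0"
  proof (rule tendstoI)
    fix e :: real assume e: "e > 0"
    define c where "c = norm x + 1"
    have c: "c > 0" unfolding c_def by (simp add: add_nonneg_pos)
    have e2: "e / (2 * c) > 0" using e c by simp
    show "\<forall>\<^sub>F n in sequentially. dist (poly_op (p n) T x - poly_op (pa f n) T x) 0 < e"
      using uniform_limitD[OF ul e2] eventually_small[OF e2]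
    proof eventually_elim
      case (elim n)
      have b: "\<forall>t\<in>{0..M}. \<bar>poly (p n) t - poly (pa f n) t\<bar> \<le> e / c"
      proof
        fix t assume t: "t \<in> {0..M}"
        have "\<bar>poly (p n) t - f t\<bar> < e / (2 * c)" using elim(1) t by (auto simp: dist_real_def)
        moreover have "\<bar>f t - poly (pa f n) t\<bar> < e / (2 * c)" using pa_spec[OF f, of n] t elim(2) by fastforce
        ultimately show "\<bar>poly (p n) t - poly (pa f n) t\<bar> \<le> e / c" by (simp add: field_simps; argo)
      qed
      have "dist (poly_op (p n) T x - poly_op (pa f n) T x) 0 \<le> e / c * norm x"
        using diff_bound[OF b] by simp
      also have "\<dots> < e / c * c" using e c unfolding c_def by (intro mult_strict_left_mono) auto
      also have "\<dots> = e" using c by simp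
      finally show ?case .
    qed
  qed
  from tendsto_add[OF this pa_conv[OF f, of x]] show ?thesis by simp
qed

lemma frac_eq:
  assumes "M = onorm T" and f: "continuous_on {0..M} (\<lambda>t. t powr \<mu>)"
  shows "frac_power T \<mu> x = Phi (\<lambda>t. t powr \<mu>) x"
  unfolding frac_power_def
proof (rule the_equality)
  show "\<forall>p. uniform_limit {0..onorm T} (\<lambda>n. poly (p n)) (\<lambda>t. t powr \<mu>) sequentially \<longrightarrow>
        (\<lambda>n. poly_op (p n) T x) \<longlonglongrightarrow> Phi (\<lambda>t. t powr \<mu>) x"
    using Phi_conv[OF f] assms(1) by auto
next
  fix v
  assume "\<forall>p. uniform_limit {0..onorm T} (\<lambda>n. poly (p n)) (\<lambda>t. t powr \<mu>) sequentially \<longrightarrow>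
        (\<lambda>n. poly_op (p n) T x) \<longlonglongrightarrow> v"
  hence "(\<lambda>n. poly_op (pa (\<lambda>t. t powr \<mu>) n) T x) \<longlonglongrightarrow> v"
    using pa_uniform[OF f] assms(1) by auto
  thus "v = Phi (\<lambda>t. t powr \<mu>) x" using pa_conv[OF f] LIMSEQ_unique by blast
qed

end



lemma young_pt:
  fixes t K \<mu> :: real
  assumes t: "t \<ge> 0" and K: "K > 0" and mu: "\<mu> > 0"
  defines "\<theta> \<equiv> (2*\<mu>+1)/(2*\<mu>+2)"
  shows "t powr (2*\<mu>+1) \<le> \<theta> * K * t powr (2*\<mu>+2) + (1-\<theta>) * K powr (-(2*\<mu>+1))"
proof (cases "t = 0")
  case True
  have "0 \<le> \<theta>" "0 \<le> 1 - \<theta>" using mu unfolding \<theta>_def by (simp_all add: field_simps)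
  then show ?thesis using True mu K by simp
next
  case False
  hence tp: "t > 0" using t by simp
  have th: "0 \<le> \<theta>" "0 \<le> 1 - \<theta>" "\<theta> + (1 - \<theta>) = 1" using mu unfolding \<theta>_def by (simp_all add: field_simps)
  have a: "K * t powr (2*\<mu>+2) > 0" using K tp by simp
  have b: "K powr (-(2*\<mu>+1)) > 0" using K by simp
  from Youngs_inequality_0[OF th a b]
  have Y: "(K * t powr (2*\<mu>+2)) powr \<theta> * (K powr (-(2*\<mu>+1))) powr (1 - \<theta>)
          \<le> \<theta> * (K * t powr (2*\<mu>+2)) + (1 - \<theta>) * K powr (-(2*\<mu>+1))" .
  have e1: "(2*\<mu>+2) * \<theta> = 2*\<mu>+1" unfolding \<theta>_def using mu by (simp add: field_simps)
  have e2: "-(2*\<mu>+1) * (1 - \<theta>) = - \<theta>" unfolding \<theta>_def using mu by (simp add: field_simps)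
  have "(K * t powr (2*\<mu>+2)) powr \<theta> * (K powr (-(2*\<mu>+1))) powr (1 - \<theta>)
        = K powr \<theta> * t powr ((2*\<mu>+2) * \<theta>) * K powr (-(2*\<mu>+1) * (1 - \<theta>))"
    using K tp by (simp add: powr_mult powr_powr)
  also have "\<dots> = t powr (2*\<mu>+1)" unfolding e1 e2 using K
    by (simp add: powr_minus field_simps)
  finally show ?thesis using Y by (simp add: mult.assoc)
qed

lemma final_real:
  fixes a b n \<mu> :: real
  assumes a0: "a \<ge> 0" and b0: "b \<ge> 0" and n0: "n \<ge> 0" and mu: "\<mu> > 0"
    and H: "\<And>K. K > 0 \<Longrightarrow> a \<le> ((2*\<mu>+1)/(2*\<mu>+2)) * K * b + (1 - (2*\<mu>+1)/(2*\<mu>+2)) * K powr (-(2*\<mu>+1)) * n"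
    and hb: "b = 0 \<Longrightarrow> a = 0" and hn: "n = 0 \<Longrightarrow> a = 0"
  shows "sqrt a powr ((2*\<mu>+2)/(2*\<mu>+1)) \<le> sqrt n powr (1/(2*\<mu>+1)) * sqrt b"
proof (cases "a = 0")
  case True
  then show ?thesis using mu b0 by simp
next
  case False
  hence ap: "a > 0" using a0 by simp
  have bp: "b > 0" using hb False b0 by force
  have np: "n > 0" using hn False n0 by force
  define \<alpha> where "\<alpha> = 2*\<mu>+1"
  define \<beta> where "\<beta> = 2*\<mu>+2"
  have al: "\<alpha> > 0" "\<beta> > 0" "\<beta> = \<alpha> + 1" using mu unfolding \<alpha>_def \<beta>_def by simp_all
  define K where "K = (n/b) powr (1/\<beta>)"
  have Kp: "K > 0" unfolding K_def using np bp by simp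
  have Kb: "K powr \<beta> = n / b" unfolding K_def using np bp al by (simp add: powr_powr)
  have "K powr (-\<alpha>) * n = K * b"
  proof -
    have "K powr (-\<alpha>) = K / K powr \<beta>" using Kp al by (simp add: powr_minus powr_add divide_inverse)
    thus ?thesis using Kb np bp by (simp add: field_simps)
  qed
  hence "a \<le> (\<alpha>/\<beta>) * K * b + (1 - \<alpha>/\<beta>) * (K * b)"
    using H[OF Kp] unfolding \<alpha>_def \<beta>_def by (simp add: mult.assoc)
  also have "\<dots> = K * b" by (simp add: algebra_simps)
  also have "\<dots> = n powr (1/\<beta>) * b powr (\<alpha>/\<beta>)"
  proof -
    have "K = n powr (1/\<beta>) / b powr (1/\<beta>)" unfolding K_def using np bp by (simp add: powr_divide)
    hence hK: "K * b powr (1/\<beta>) = n powr (1/\<beta>)" using bp by simp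
    have hb2: "b = b powr (1/\<beta>) * b powr (\<alpha>/\<beta>)"
    proof -
      have "1/\<beta> + \<alpha>/\<beta> = 1" using al by (simp add: field_simps)
      thus ?thesis using bp by (simp add: powr_add[symmetric])
    qed
    from hb2 have "K * b = K * (b powr (1/\<beta>) * b powr (\<alpha>/\<beta>))" by (rule arg_cong)
    also have "\<dots> = (K * b powr (1/\<beta>)) * b powr (\<alpha>/\<beta>)" by (simp only: mult.assoc)
    finally show ?thesis unfolding hK .
  qed
  finally have aa: "a \<le> n powr (1/\<beta>) * b powr (\<alpha>/\<beta>)" .
  have "sqrt a powr (\<beta>/\<alpha>) = a powr (\<beta>/(2*\<alpha>))"
    using ap by (simp add: powr_half_sqrt[symmetric] powr_powr)
  also have "\<dots> \<le> (n powr (1/\<beta>) * b powr (\<alpha>/\<beta>)) powr (\<beta>/(2*\<alpha>))"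
    using aa ap al by (intro powr_mono2) simp_all
  also have "\<dots> = n powr (1/(2*\<alpha>)) * b powr (1/2)"
    using np bp al by (simp add: powr_mult powr_powr)
  also have "\<dots> = sqrt n powr (1/\<alpha>) * sqrt b"
    using np bp by (simp add: powr_half_sqrt[symmetric] powr_powr)
  finally show ?thesis unfolding \<alpha>_def \<beta>_def .
qed

lemma bound_pt:
  fixes t P K \<mu> \<epsilon> M :: real
  assumes t: "0 \<le> t" "t \<le> M" and K: "K > 0" and mu: "\<mu> > 0"
    and P: "\<bar>P - t powr \<mu>\<bar> \<le> \<epsilon>" and e1: "\<epsilon> \<le> 1"
  defines "\<theta> \<equiv> (2*\<mu>+1)/(2*\<mu>+2)"
  shows "\<theta>*K*t^2*P^2 + (1-\<theta>)*K powr (-(2*\<mu>+1)) - t*P^2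
           \<ge> -((\<theta>*K*M^2 + M)*(2*M powr \<mu> + 1)*\<epsilon>)"
proof -
  define F where "F = t powr \<mu>"
  define c where "c = (1-\<theta>)*K powr (-(2*\<mu>+1))"
  have th: "0 \<le> \<theta>" using mu unfolding \<theta>_def by simp
  have F0: "F \<ge> 0" unfolding F_def by simp
  have FM: "F \<le> M powr \<mu>" unfolding F_def using t mu by (intro powr_mono2) simp_all
  have tF1: "t * F^2 = t powr (2*\<mu>+1)" and tF2: "t^2 * F^2 = t powr (2*\<mu>+2)"
  proof -
    have "t * F^2 = t powr (2*\<mu>+1) \<and> t^2 * F^2 = t powr (2*\<mu>+2)"
    proof (cases "t = 0")
      case True then show ?thesis using mu unfolding F_def by simp
    next
      case False
      hence tp: "t > 0" using t by simp
      have "F^2 = t powr \<mu> * t powr \<mu>" unfolding F_def power2_eq_square ..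
      also have "\<dots> = t powr (\<mu> + \<mu>)" by (rule powr_add[symmetric])
      also have "\<mu> + \<mu> = 2*\<mu>" by simp
      finally have f2: "F^2 = t powr (2*\<mu>)" .
      have p1: "t powr (2*\<mu>+1) = t powr (2*\<mu>) * t powr 1" by (rule powr_add)
      have p2: "t powr (2*\<mu>+2) = t powr (2*\<mu>) * t powr 2" by (rule powr_add)
      have "t powr 1 = t" using tp by simp
      moreover have "t powr 2 = t^2" using tp by simp
      ultimately have "t powr (2*\<mu>+1) = t * t powr (2*\<mu>)" "t powr (2*\<mu>+2) = t^2 * t powr (2*\<mu>)"
        using p1 p2 by (simp_all only: mult.commute)
      moreover note f2
      ultimately show ?thesis by simp
    qed
    thus "t * F^2 = t powr (2*\<mu>+1)" "t^2 * F^2 = t powr (2*\<mu>+2)" by simp_all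
  qed
  have Y: "t powr (2*\<mu>+1) \<le> \<theta>*K*t powr (2*\<mu>+2) + c"
    unfolding \<theta>_def c_def by (rule young_pt[OF t(1) K mu])
  have Y2: "\<theta>*K*t^2*F^2 = \<theta>*K*t powr (2*\<mu>+2)" by (simp only: mult.assoc tF2)
  have g: "\<theta>*K*t^2*F^2 + c - t*F^2 \<ge> 0"
    using Y Y2 tF1 by linarith
  have eq: "(\<theta>*K*t^2*P^2 + c - t*P^2) - (\<theta>*K*t^2*F^2 + c - t*F^2) = (\<theta>*K*t^2 - t)*(P^2 - F^2)"
    by (simp add: algebra_simps)
  have b1: "\<bar>\<theta>*K*t^2 - t\<bar> \<le> \<theta>*K*M^2 + M"
  proof -
    have "t^2 \<le> M^2" using t by (intro power_mono) simp_all
    hence "\<theta>*K*t^2 \<le> \<theta>*K*M^2" using th K by (intro mult_left_mono) simp_all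
    moreover have "0 \<le> \<theta>*K*t^2" using th K by simp
    ultimately show ?thesis using t by linarith
  qed
  have b2: "\<bar>P^2 - F^2\<bar> \<le> (2*M powr \<mu> + 1) * \<epsilon>"
  proof -
    have "P^2 - F^2 = (P - F) * (P + F)" by (simp add: power2_eq_square algebra_simps)
    hence "\<bar>P^2 - F^2\<bar> = \<bar>P - F\<bar> * \<bar>P + F\<bar>" by (simp add: abs_mult)
    also have "\<dots> \<le> \<epsilon> * (2*M powr \<mu> + 1)"
    proof (rule mult_mono)
      show "\<bar>P - F\<bar> \<le> \<epsilon>" using P unfolding F_def .
      show "\<bar>P + F\<bar> \<le> 2*M powr \<mu> + 1" using P e1 F0 FM unfolding F_def[symmetric] by linarith
    qed (use P in auto)
    finally show ?thesis by (simp add: mult.commute)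
  qed
  have "\<bar>(\<theta>*K*t^2 - t)*(P^2 - F^2)\<bar> \<le> (\<theta>*K*M^2 + M) * ((2*M powr \<mu> + 1) * \<epsilon>)"
    unfolding abs_mult by (rule mult_mono[OF b1 b2]) (use th K t in \<open>auto intro!: add_nonneg_nonneg\<close>)
  hence lb: "-((\<theta>*K*M^2 + M)*(2*M powr \<mu> + 1)*\<epsilon>) \<le> (\<theta>*K*t^2 - t)*(P^2 - F^2)"
    by (simp only: mult.assoc abs_le_iff) linarith
  show ?thesis unfolding c_def[symmetric] using eq g lb by linarith
qed

context posop
begin

lemma poly_op_zero_vec: "poly_op p T 0 = 0"
  by (induction p) (simp_all add: poly_op_pCons lin linear_0)

lemma main_ineq:
  assumes mu: "\<mu> > 0" and K: "K > 0"
  defines "f \<equiv> \<lambda>t::real. t powr \<mu>"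
  defines "\<theta> \<equiv> (2*\<mu>+1)/(2*\<mu>+2)"
  shows "T (Phi f w) \<bullet> Phi f w \<le> \<theta>*K*(T (Phi f w) \<bullet> T (Phi f w))
           + (1-\<theta>) * K powr (-(2*\<mu>+1)) * (w \<bullet> w)"
proof -
  define u where "u = Phi f w"
  define c where "c = (1-\<theta>) * K powr (-(2*\<mu>+1))"
  define X where "X = [:0,1::real:]"
  define p where "p = pa f"
  define P where "P n = poly_op (p n) T w" for n
  define a where "a n = T (P n) \<bullet> P n" for n
  define b where "b n = T (P n) \<bullet> T (P n)" for n
  define D where "D = (\<theta>*K*M^2 + M)*(2*M powr \<mu> + 1)*(w \<bullet> w)"
  have fc: "continuous_on {0..M} f" unfolding f_def
    using mu by (intro continuous_on_powr') (auto intro: continuous_intros)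
  have Pl: "P \<longlonglongrightarrow> u" unfolding P_def p_def u_def by (rule pa_conv[OF fc])
  have TPl: "(\<lambda>n. T (P n)) \<longlonglongrightarrow> T u" by (rule bounded_linear.tendsto[OF bl Pl])
  have al: "a \<longlonglongrightarrow> T u \<bullet> u" unfolding a_def by (intro tendsto_inner TPl Pl)
  have bl': "b \<longlonglongrightarrow> T u \<bullet> T u" unfolding b_def by (intro tendsto_inner TPl)
  have step: "\<theta>*K*b n + c*(w \<bullet> w) - a n \<ge> - (D * (1 / Suc n))" for n
  proof -
    define h where "h = smult (\<theta>*K) (p n * (X * (X * p n))) + [:c:] - p n * (X * p n)"
    have ha: "poly_op (p n * (X * p n)) T w \<bullet> w = a n"
    proof -
      have "poly_op (p n * (X * p n)) T w = poly_op (p n) T (T (P n))"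
        unfolding P_def X_def by (simp only: poly_op_mult[OF lin] poly_op_X[OF lin])
      also have "poly_op (p n) T (T (P n)) \<bullet> w = T (P n) \<bullet> P n" unfolding P_def by (rule psa)
      finally show ?thesis unfolding a_def .
    qed
    have hb: "poly_op (p n * (X * (X * p n))) T w \<bullet> w = b n"
    proof -
      have "poly_op (p n * (X * (X * p n))) T w = poly_op (p n) T (T (T (P n)))"
        unfolding P_def X_def by (simp only: poly_op_mult[OF lin] poly_op_X[OF lin])
      also have "poly_op (p n) T (T (T (P n))) \<bullet> w = T (T (P n)) \<bullet> P n" unfolding P_def by (rule psa)
      also have "\<dots> = T (P n) \<bullet> T (P n)" by (rule sa)
      finally show ?thesis unfolding b_def .
    qed
    have hh: "poly_op h T w \<bullet> w = \<theta>*K*b n + c*(w \<bullet> w) - a n"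
      unfolding h_def using ha hb
      by (simp add: poly_op_diff[OF lin] poly_op_add[OF lin] poly_op_smult[OF lin] lin inner_diff_left inner_add_left)
    have "\<forall>t\<in>{0..M}. poly h t \<ge> - ((\<theta>*K*M^2 + M)*(2*M powr \<mu> + 1) * (1 / Suc n))"
    proof
      fix t assume t: "t \<in> {0..M}"
      have e: "\<bar>poly (p n) t - t powr \<mu>\<bar> \<le> 1 / Suc n"
        using pa_spec[OF fc, of n] t unfolding p_def f_def by (auto simp: abs_minus_commute less_imp_le)
      have "poly h t = \<theta>*K*t^2*(poly (p n) t)^2 + c - t*(poly (p n) t)^2"
        unfolding h_def X_def by (simp add: power2_eq_square algebra_simps)
      thus "poly h t \<ge> - ((\<theta>*K*M^2 + M)*(2*M powr \<mu> + 1) * (1 / Suc n))"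
        using bound_pt[of t M K \<mu> "poly (p n) t" "1 / Suc n"] t K mu e
        unfolding c_def \<theta>_def by simp
    qed
    from Pos_approx[OF this, of w] hh show ?thesis unfolding D_def by (simp add: mult.assoc mult.commute mult.left_commute)
  qed
  have lim: "(\<lambda>n. \<theta>*K*b n + c*(w \<bullet> w) - a n + D * (1 / Suc n)) \<longlonglongrightarrow> \<theta>*K*(T u \<bullet> T u) + c*(w \<bullet> w) - T u \<bullet> u + D * 0"
    by (intro tendsto_intros al bl' LIMSEQ_Suc[OF lim_inverse_n', unfolded divide_inverse[symmetric]])
  have "0 \<le> \<theta>*K*(T u \<bullet> T u) + c*(w \<bullet> w) - T u \<bullet> u + D * 0"
  proof (rule LIMSEQ_le_const[OF lim])
    have "0 \<le> \<theta>*K*b n + c*(w \<bullet> w) - a n + D * (1 / Suc n)" for n using step[of n] by linarith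
    thus "\<exists>N. \<forall>n\<ge>N. 0 \<le> \<theta>*K*b n + c*(w \<bullet> w) - a n + D * (1 / Suc n)" by blast
  qed
  thus ?thesis unfolding u_def c_def by simp
qed

end



lemma adj_works:
  fixes A :: "'a::{real_inner,complete_space} \<Rightarrow> 'b::real_inner"
  assumes bl: "bounded_linear A"
  shows "A x \<bullet> y = x \<bullet> adjoint A y"
proof -
  have "\<forall>y. \<exists>z. \<forall>x. A x \<bullet> y = x \<bullet> z"
  proof
    fix y
    have "bounded_linear (\<lambda>x. A x \<bullet> y)"
      using bounded_linear_compose[OF bounded_linear_inner_left bl] .
    then show "\<exists>z. \<forall>x. A x \<bullet> y = x \<bullet> z" by (rule riesz)
  qed
  then have "\<exists>f'. \<forall>y x. A x \<bullet> y = x \<bullet> f' y" by (rule choice)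
  then have "\<exists>f'. \<forall>x y. A x \<bullet> y = x \<bullet> f' y" by blast
  then have "\<forall>x y. A x \<bullet> y = x \<bullet> adjoint A y" unfolding adjoint_def by (rule someI_ex)
  then show ?thesis by blast
qed

lemma adj_bl:
  fixes A :: "'a::{real_inner,complete_space} \<Rightarrow> 'b::real_inner"
  assumes bl: "bounded_linear A"
  shows "bounded_linear (adjoint A)"
proof -
  interpret bounded_linear A by fact
  obtain K where K: "K > 0" "\<And>x. norm (A x) \<le> norm x * K" using pos_bounded by blast
  have lin: "linear (adjoint A)"
  proof
    fix y z and r :: real
    show "adjoint A (y + z) = adjoint A y + adjoint A z"
      by (rule vector_eq_ldot[THEN iffD1]) (metis adj_works[OF bl] inner_add_right)
    show "adjoint A (r *\<^sub>R y) = r *\<^sub>R adjoint A y"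
      by (rule vector_eq_ldot[THEN iffD1]) (metis adj_works[OF bl] inner_scaleR_right)
  qed
  have nK: "norm (adjoint A y) \<le> norm y * K" for y
  proof -
    have "(norm (adjoint A y))^2 = A (adjoint A y) \<bullet> y"
      by (simp add: power2_norm_eq_inner adj_works[OF bl])
    also have "\<dots> \<le> norm (A (adjoint A y)) * norm y" by (rule norm_cauchy_schwarz)
    also have "\<dots> \<le> norm (adjoint A y) * K * norm y" using K(2) by (simp add: mult_right_mono)
    finally have "norm (adjoint A y) * norm (adjoint A y) \<le> norm (adjoint A y) * (norm y * K)"
      by (simp add: power2_eq_square mult_ac)
    thus ?thesis by (cases "norm (adjoint A y) = 0") (use K(1) in \<open>auto simp: mult_le_cancel_left\<close>)
  qed
  show ?thesis
    by (rule bounded_linear_intro[where K=K]) (simp_all add: linear_add[OF lin] linear_scale[OF lin] nK)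
qed

theorem mainTheorem1:
  fixes A :: "'x::{real_inner, complete_space} \<Rightarrow> 'y::{real_inner, complete_space}"
    and xd x w :: 'x and y :: 'y and \<mu> :: real
  assumes "bounded_linear A"
    and "y = A xd"
    and "\<mu> > 0"
    and "x - xd = frac_power (adjoint A \<circ> A) \<mu> w"
  shows "norm (A x - y) powr ((2*\<mu>+2)/(2*\<mu>+1))
           \<le> norm w powr (1/(2*\<mu>+1)) * norm (adjoint A (A x - y))"
proof -
  note blA = assms(1)
  have mu: "\<mu> > 0" by (rule assms(3))
  define T where "T = adjoint A \<circ> A"
  define M where "M = onorm T"
  have blAd: "bounded_linear (adjoint A)" by (rule adj_bl[OF blA])
  have blT: "bounded_linear T" unfolding T_def comp_def by (rule bounded_linear_compose[OF blAd blA])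
  have Tx: "T z = adjoint A (A z)" for z by (simp add: T_def)
  have adj: "A z \<bullet> v = z \<bullet> adjoint A v" for z v by (rule adj_works[OF blA])
  have TA: "T z \<bullet> v = A z \<bullet> A v" for z v unfolding Tx by (metis adj inner_commute)
  have sa: "T z \<bullet> v = z \<bullet> T v" for z v by (metis TA inner_commute)
  have pos: "0 \<le> T z \<bullet> z" for z unfolding TA by simp
  have nb: "norm (T z) \<le> M * norm z" for z unfolding M_def by (rule onorm[OF blT])
  have M0: "0 \<le> M" unfolding M_def by (rule onorm_pos_le[OF blT])
  have Av: "(norm (A v))^2 \<le> M * (norm v)^2" for v
  proof -
    have "(norm (A v))^2 = T v \<bullet> v" by (simp add: TA power2_norm_eq_inner)
    also have "\<dots> \<le> norm (T v) * norm v" by (rule norm_cauchy_schwarz)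
    also have "\<dots> \<le> M * norm v * norm v" using nb[of v] by (simp add: mult_right_mono)
    finally show ?thesis by (simp add: power2_eq_square mult.assoc)
  qed
  have sqb: "(norm (T z))^2 \<le> M * (T z \<bullet> z)" for z
  proof -
    have "(norm (T z))^2 = A z \<bullet> A (T z)" by (simp add: power2_norm_eq_inner TA inner_commute)
    also have "\<dots> \<le> norm (A z) * norm (A (T z))" by (rule norm_cauchy_schwarz)
    finally have h1: "(norm (T z))^2 \<le> norm (A z) * norm (A (T z))" .
    have "((norm (T z))^2)^2 \<le> (norm (A z) * norm (A (T z)))^2"
      using h1 by (intro power_mono) simp_all
    also have "\<dots> = (norm (A z))^2 * (norm (A (T z)))^2" by (simp add: power_mult_distrib)
    also have "\<dots> \<le> (norm (A z))^2 * (M * (norm (T z))^2)" by (intro mult_left_mono Av) simp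
    finally have h2: "(norm (T z))^2 * (norm (T z))^2 \<le> ((norm (A z))^2 * M) * (norm (T z))^2"
      by (simp add: power2_eq_square mult_ac)
    have AT: "(norm (A z))^2 = T z \<bullet> z" by (simp add: TA power2_norm_eq_inner)
    show ?thesis
    proof (cases "norm (T z) = 0")
      case True then show ?thesis using M0 pos[of z] by simp
    next
      case False
      hence "(norm (T z))^2 > 0" by simp
      with h2 have "(norm (T z))^2 \<le> (norm (A z))^2 * M" by (rule mult_right_le_imp_le)
      thus ?thesis unfolding AT by (simp add: mult.commute)
    qed
  qed
  interpret posop T M
    by (rule posop.intro[OF blT sa pos sqb nb M0])
  define f where "f = (\<lambda>t::real. t powr \<mu>)"
  have fc: "continuous_on {0..M} (\<lambda>t::real. t powr \<mu>)"
    using mu by (intro continuous_on_powr') (auto intro: continuous_intros)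
  define u where "u = Phi f w"
  have xu: "x - xd = u" unfolding u_def f_def using assms(4) frac_eq[OF M_def fc, of w]
    unfolding T_def by simp
  have Au: "A x - y = A u"
  proof -
    have "A (x - xd) = A x - A xd" using blA by (simp add: linear_diff bounded_linear.linear)
    thus ?thesis using assms(2) xu by simp
  qed
  define a where "a = T u \<bullet> u"
  define b where "b = T u \<bullet> T u"
  define n where "n = w \<bullet> w"
  have H: "a \<le> ((2*\<mu>+1)/(2*\<mu>+2)) * K * b + (1 - (2*\<mu>+1)/(2*\<mu>+2)) * K powr (-(2*\<mu>+1)) * n"
    if "K > 0" for K
    using main_ineq[OF mu that, of w] unfolding a_def b_def n_def u_def f_def by simp
  have hb: "a = 0" if "b = 0"
  proof -
    have "T u = 0" using that unfolding b_def by simp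
    thus ?thesis unfolding a_def by simp
  qed
  have hn: "a = 0" if "n = 0"
  proof -
    have w0: "w = 0" using that unfolding n_def by simp
    have "(\<lambda>k. poly_op (pa f k) T 0) \<longlonglongrightarrow> Phi f 0" using pa_conv fc unfolding f_def by blast
    hence "(\<lambda>k. 0) \<longlonglongrightarrow> Phi f 0" by (simp add: poly_op_zero_vec)
    hence "Phi f 0 = 0" using LIMSEQ_unique tendsto_const by blast
    hence "u = 0" unfolding u_def w0 .
    thus ?thesis unfolding a_def using lin by (simp add: linear_0)
  qed
  have F: "sqrt a powr ((2*\<mu>+2)/(2*\<mu>+1)) \<le> sqrt n powr (1/(2*\<mu>+1)) * sqrt b"
    by (rule final_real[OF _ _ _ mu H hb hn]) (simp_all add: a_def b_def n_def pos)
  have n1: "norm (A x - y) = sqrt a" unfolding Au a_def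
    by (simp add: norm_eq_sqrt_inner TA)
  have n2: "norm w = sqrt n" unfolding n_def by (simp add: norm_eq_sqrt_inner)
  have n3: "norm (adjoint A (A x - y)) = sqrt b" unfolding Au b_def Tx[symmetric]
    by (simp add: norm_eq_sqrt_inner)
  show ?thesis unfolding n1 n2 n3 by (rule F)
qed

end
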